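(* Fix $\nu\in\mathbb{R}$. For real $\varepsilon$ with $0<\varepsilon<1$ and $\frac{1}{\sqrt{\varepsilon}}-\nu\in 2\mathbb{N}$, define $$d^L_2(\varepsilon)=\Big(-\frac{1}{2\sqrt{\varepsilon}}\Big)^{1-\nu}\frac{\Gamma\big(\frac{1}{2\sqrt{\varepsilon}}+\frac{\nu}{2}\big)}{\Gamma(\nu)\,\Gamma\big(\frac{1}{2\sqrt{\varepsilon}}-\frac{\nu}{2}+1\big)},\qquad d^R_3(\varepsilon)=-\frac12\Big(\frac{1}{2\sqrt{\varepsilon}}\Big)^{1-\nu}\frac{\Gamma\big(\frac{1}{2\sqrt{\varepsilon}}+\frac{\nu}{2}\big)}{\Gamma(\nu)\,\Gamma\big(\frac{1}{2\sqrt{\varepsilon}}-\frac{\nu}{2}+1\big)},$$ and the nilpotent matrices $T_L=d^L_2(\varepsilon)E_{12}$, $T_R=d^R_3(\varepsilon)E_{13}$. Then, as $\sqrt{\varepsilon}\to 0$ along such values of $\varepsilon$, $$e^{2\pi i T_L}\longrightarrow St_\pi=\begin{pmatrix}1&-\frac{2\pi i\,e^{-\pi i\nu}}{\Gamma(\nu)}&0\\0&1&0\\0&0&1\end{pmatrix},\qquad e^{2\pi i T_R}\longrightarrow St_0=\begin{pmatrix}1&0&-\frac{\pi i}{\Gamma(\nu)}\\0&1&0\\0&0&1\end{pmatrix}.$$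
   Context: $E_{ij}$ denotes the $3\times3$ matrix unit with $1$ in position $(i,j)$. $1/\Gamma$ denotes the (entire) reciprocal Gamma function, and for $w>0$, $(-w)^{1-\nu}:=e^{i\pi(1-\nu)}w^{1-\nu}$. $\mathbb{N}$ denotes the positive integers. Interpretation: the initial equation is $L_3L_2L_1y=0$ with $L_1=\partial-\frac1{x^2}$, $L_2=\partial-\frac{\nu-2}{x}-\frac{2}{x^2}$, $L_3=\partial-\frac{\nu-4}{x}$, $\partial=d/dx$; it has an irregular singularity of Poincaré rank 1 at $0$, and $St_0$, $St_\pi$ are its Stokes matrices at the singular directions $0$ and $\pi$ (with respect to the Borel-summed Hukuhara–Turrittin fundamental matrix). The perturbed equation is $L_3(\varepsilon)L_2(\varepsilon)L_1(\varepsilon)y=0$ with $L_1(\varepsilon)=\partial-\frac{1}{x^2-\varepsilon}$, $L_2(\varepsilon)=\partial-\frac{(\nu-2)x+2}{x^2-\varepsilon}$, $L_3(\varepsilon)=\partial-\frac{(\nu-4)x}{x^2-\varepsilon}$, with Fuchsian singularities $x_L=-\sqrt{\varepsilon}$, $x_R=\sqrt{\varepsilon}$; the numbers $d^L_2$ and $d^R_3$ are the coefficients of the logarithmic terms of its solutions at $x_L$ and $x_R$, namely $d^L_2=\operatorname{Res}_{x=x_L}\frac{(x-\sqrt\varepsilon)^{\frac1{2\sqrt\varepsilon}+\frac{\nu-2}{2}}}{(x+\sqrt\varepsilon)^{\frac1{2\sqrt\varepsilon}-\frac{\nu-2}{2}}}$ and $d^R_3=-\frac12\operatorname{Res}_{x=x_R}\frac{(x+\sqrt\varepsilon)^{\frac1{2\sqrt\varepsilon}+\frac{\nu-2}{2}}}{(x-\sqrt\varepsilon)^{\frac1{2\sqrt\varepsilon}-\frac{\nu-2}{2}}}$,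 and the monodromy matrices of the perturbed equation around $x_j$ are $e^{\pi i(\Lambda+Q/x_j)}e^{2\pi i T_j}$ with $\Lambda=\mathrm{diag}(0,\nu-2,\nu-4)$, $Q=\mathrm{diag}(1,2,0)$. *)

theory Defs
  imports "HOL-Analysis.Analysis"
begin

type_synonym cmat3 = "complex ^ 3 ^ 3"

text \<open>Rows and columns are labelled by the elements 1, 2, 3 of the numeral type 3.\<close>

definition munit :: "3 \<Rightarrow> 3 \<Rightarrow> cmat3" where
  "munit i j = (\<chi> r s. if r = i \<and> s = j then 1 else 0)"

definition cscaleM :: "complex \<Rightarrow> cmat3 \<Rightarrow> cmat3" where
  "cscaleM c M = (\<chi> r s. c * M $ r $ s)"

fun mpow :: "cmat3 \<Rightarrow> nat \<Rightarrow> cmat3" where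
  "mpow A 0 = mat 1"
| "mpow A (Suc n) = A ** mpow A n"

definition mexp :: "cmat3 \<Rightarrow> cmat3" where
  "mexp A = (\<Sum>n. (1 / fact n) *\<^sub>R mpow A n)"

text \<open>For w > 0: (-w)^(1-nu) := e^(i pi (1-nu)) w^(1-nu).\<close>
definition negpow :: "real \<Rightarrow> real \<Rightarrow> complex" where
  "negpow w a = exp (\<i> * of_real pi * of_real a) * of_real (w powr a)"

definition admissible :: "real \<Rightarrow> real \<Rightarrow> bool" where
  "admissible \<nu> \<epsilon> \<longleftrightarrow> 0 < \<epsilon> \<and> \<epsilon> < 1 \<and>
     (\<exists>k::nat. k \<ge> 1 \<and> 1 / sqrt \<epsilon> - \<nu> = 2 * real k)"

definition gamma_ratio :: "real \<Rightarrow> real \<Rightarrow> complex" where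
  "gamma_ratio \<nu> \<epsilon> =
     Gamma (complex_of_real (1 / (2 * sqrt \<epsilon>) + \<nu> / 2)) * rGamma (complex_of_real \<nu>)
     * rGamma (complex_of_real (1 / (2 * sqrt \<epsilon>) - \<nu> / 2 + 1))"

definition dL2 :: "real \<Rightarrow> real \<Rightarrow> complex" where
  "dL2 \<nu> \<epsilon> = negpow (1 / (2 * sqrt \<epsilon>)) (1 - \<nu>) * gamma_ratio \<nu> \<epsilon>"

definition dR3 :: "real \<Rightarrow> real \<Rightarrow> complex" where
  "dR3 \<nu> \<epsilon> = - (1/2) * of_real ((1 / (2 * sqrt \<epsilon>)) powr (1 - \<nu>)) * gamma_ratio \<nu> \<epsilon>"

definition T_L :: "real \<Rightarrow> real \<Rightarrow> cmat3" where
  "T_L \<nu> \<epsilon> = cscaleM (dL2 \<nu> \<epsilon>) (munit 1 2)"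

definition T_R :: "real \<Rightarrow> real \<Rightarrow> cmat3" where
  "T_R \<nu> \<epsilon> = cscaleM (dR3 \<nu> \<epsilon>) (munit 1 3)"

definition St_pi :: "real \<Rightarrow> cmat3" where
  "St_pi \<nu> = mat 1 + cscaleM (- 2 * of_real pi * \<i> * exp (- of_real pi * \<i> * of_real \<nu>)
                                  * rGamma (complex_of_real \<nu>)) (munit 1 2)"

definition St_0 :: "real \<Rightarrow> cmat3" where
  "St_0 \<nu> = mat 1 + cscaleM (- of_real pi * \<i> * rGamma (complex_of_real \<nu>)) (munit 1 3)"

end

theory Submission imports Defs "HOL-Real_Asymp.Real_Asymp" begin

lemma seq_lim:
  fixes \<nu> :: real
  shows "(\<lambda>n. complex_of_real ((\<nu>/2 + real n) powr (1-\<nu>)) * Gamma (complex_of_real (\<nu> + real n))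
          * rGamma (complex_of_real \<nu>) * rGamma (complex_of_real (real n + 1))) \<longlonglongrightarrow> rGamma (complex_of_real \<nu>)"
proof -
  define h where "h n = (\<nu>/2 + real n) powr (1-\<nu>) * real n powr \<nu> / (\<nu> + real n)" for n :: nat
  have "h \<longlonglongrightarrow> 1" unfolding h_def by real_asymp
  hence "(\<lambda>n. rGamma_series (complex_of_real \<nu>) n * complex_of_real (h n)) \<longlonglongrightarrow> rGamma (complex_of_real \<nu>) * complex_of_real 1"
    by (intro tendsto_intros)
  hence L: "(\<lambda>n. rGamma_series (complex_of_real \<nu>) n * complex_of_real (h n)) \<longlonglongrightarrow> rGamma (complex_of_real \<nu>)"
    by simp
  have ev: "eventually (\<lambda>n. rGamma_series (complex_of_real \<nu>) n * complex_of_real (h n) =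
        complex_of_real ((\<nu>/2 + real n) powr (1-\<nu>)) * Gamma (complex_of_real (\<nu> + real n))
          * rGamma (complex_of_real \<nu>) * rGamma (complex_of_real (real n + 1))) sequentially"
  proof (rule eventually_sequentiallyI[of "nat \<lceil>\<bar>\<nu>\<bar>\<rceil> + 1"])
    fix n assume n: "nat \<lceil>\<bar>\<nu>\<bar>\<rceil> + 1 \<le> n"
    hence npos: "real n > 0" and pos: "\<nu> + real n > 0" and pos2: "\<nu>/2 + real n > 0"
      by linarith+
    have nn: "complex_of_real (\<nu> + real n) \<notin> \<int>\<^sub>\<le>\<^sub>0"
    proof -
      have "(\<nu> + real n) \<notin> \<int>\<^sub>\<le>\<^sub>0" using pos nonpos_Ints_nonpos by force
      thus ?thesis by (subst of_real_in_nonpos_Ints_iff)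
    qed
    have G1: "Gamma (complex_of_real (\<nu> + real n)) * rGamma (complex_of_real \<nu>) = pochhammer (complex_of_real \<nu>) n"
      using pochhammer_rGamma[of "complex_of_real \<nu>" n] nn
      by (simp add: rGamma_inverse_Gamma Gamma_eq_zero_iff field_simps)
    have G2: "rGamma (complex_of_real (real n + 1)) = inverse (fact n)"
      using Gamma_fact[of n, where 'a=complex] by (simp add: rGamma_inverse_Gamma add.commute)
    have E: "exp (complex_of_real \<nu> * complex_of_real (ln (real n))) = complex_of_real (real n powr \<nu>)"
      using npos by (simp add: powr_def exp_of_real flip: of_real_mult)
    have P: "pochhammer (complex_of_real \<nu>) (n+1) = pochhammer (complex_of_real \<nu>) n * complex_of_real (\<nu> + real n)"
      by (simp add: pochhammer_rec')
    have A: "\<And>(p::complex) F a b c. b \<noteq> 0 \<Longrightarrow> c \<noteq> 0 \<Longrightarrow>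
       p * complex_of_real c / (F * complex_of_real b) * complex_of_real (a*b/c) = complex_of_real a * p * inverse F"
      by (simp add: field_simps)
    have B: "complex_of_real ((\<nu>/2 + real n) powr (1-\<nu>)) * Gamma (complex_of_real (\<nu> + real n))
          * rGamma (complex_of_real \<nu>) * rGamma (complex_of_real (real n + 1))
          = complex_of_real ((\<nu>/2 + real n) powr (1-\<nu>)) * pochhammer (complex_of_real \<nu>) n * inverse (fact n)"
      by (simp only: G1 G2 mult.assoc)
    show "rGamma_series (complex_of_real \<nu>) n * complex_of_real (h n) =
        complex_of_real ((\<nu>/2 + real n) powr (1-\<nu>)) * Gamma (complex_of_real (\<nu> + real n))
          * rGamma (complex_of_real \<nu>) * rGamma (complex_of_real (real n + 1))"
      unfolding B rGamma_series_def h_def E P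
      by (rule A) (use npos pos in auto)
  qed
  show ?thesis using Lim_transform_eventually[OF L ev] .
qed

lemma cscale_cscale: "cscaleM c (cscaleM d M) = cscaleM (c*d) M"
  by (simp add: cscaleM_def vec_eq_iff)

lemma nil_sq:
  assumes "i \<noteq> j"
  shows "cscaleM a (munit i j) ** cscaleM a (munit i j) = 0"
  using assms by (simp add: cscaleM_def munit_def matrix_matrix_mult_def vec_eq_iff
      if_distrib[of "\<lambda>x. _ * x"] cong: if_cong)

lemma mexp_nil:
  assumes "i \<noteq> j"
  shows "mexp (cscaleM c (cscaleM d (munit i j))) = mat 1 + cscaleM (c*d) (munit i j)"
proof -
  define N where "N = cscaleM (c*d) (munit i j)"
  have NN: "N ** N = 0" unfolding N_def by (rule nil_sq[OF assms])
  have z: "mpow N n = 0" if "n \<notin> {0,1}" for n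
  proof -
    have "n \<ge> 2" using that by auto
    define m where "m = n - 2"
    have m: "n = Suc (Suc m)" using \<open>n \<ge> 2\<close> by (simp add: m_def)
    have "mpow N n = (N ** N) ** mpow N m" by (simp add: m matrix_mul_assoc)
    also have "\<dots> = 0" by (simp add: NN)
    finally show ?thesis .
  qed
  have "mexp N = (\<Sum>n\<in>{0,1}. (1 / fact n) *\<^sub>R mpow N n)"
    unfolding mexp_def by (rule suminf_finite) (auto simp: z)
  also have "\<dots> = mat 1 + N" by (simp add: matrix_mul_rid)
  finally show ?thesis by (simp add: N_def cscale_cscale)
qed

lemma tendsto_St:
  assumes "(f \<longlongrightarrow> a) F"
  shows "((\<lambda>x. mat 1 + cscaleM (f x) M) \<longlongrightarrow> mat 1 + cscaleM a M) F"
  apply (rule vec_tendstoI)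
  apply (rule vec_tendstoI)
  apply (simp add: cscaleM_def)
  by (intro tendsto_intros assms)

definition Kf :: "real \<Rightarrow> real \<Rightarrow> nat" where
  "Kf \<nu> \<epsilon> = nat \<lfloor>(1 / sqrt \<epsilon> - \<nu>) / 2\<rfloor>"

lemma Kf_lim: "filterlim (Kf \<nu>) sequentially (at 0 within {\<epsilon>. admissible \<nu> \<epsilon>})"
proof -
  have 1: "filterlim (\<lambda>\<epsilon>::real. (1 / sqrt \<epsilon> - \<nu>) / 2) at_top (at_right 0)" by real_asymp
  have 2: "filterlim (Kf \<nu>) sequentially (at_right 0)"
    unfolding Kf_def
    by (rule filterlim_compose[OF filterlim_nat_sequentially filterlim_compose[OF filterlim_floor_sequentially 1]])
  have "at 0 within {\<epsilon>. admissible \<nu> \<epsilon>} \<le> at_right (0::real)"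
    by (rule at_le) (auto simp: admissible_def)
  thus ?thesis using 2 filterlim_mono by blast
qed

definition gseq :: "real \<Rightarrow> nat \<Rightarrow> complex" where
  "gseq \<nu> n = complex_of_real ((\<nu>/2 + real n) powr (1-\<nu>)) * Gamma (complex_of_real (\<nu> + real n))
          * rGamma (complex_of_real \<nu>) * rGamma (complex_of_real (real n + 1))"

lemma gseq_comp: "((\<lambda>\<epsilon>. gseq \<nu> (Kf \<nu> \<epsilon>)) \<longlongrightarrow> rGamma (complex_of_real \<nu>)) (at 0 within {\<epsilon>. admissible \<nu> \<epsilon>})"
  unfolding gseq_def by (rule filterlim_compose[OF seq_lim[of \<nu>] Kf_lim[of \<nu>]])

lemma adm_eq:
  assumes "admissible \<nu> \<epsilon>"
  shows "dL2 \<nu> \<epsilon> = exp (\<i> * of_real pi * of_real (1 - \<nu>)) * gseq \<nu> (Kf \<nu> \<epsilon>)"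
    and "dR3 \<nu> \<epsilon> = - (1/2) * gseq \<nu> (Kf \<nu> \<epsilon>)"
proof -
  obtain k :: nat where k: "1 / sqrt \<epsilon> - \<nu> = 2 * real k" using assms by (auto simp: admissible_def)
  have K: "Kf \<nu> \<epsilon> = k" unfolding Kf_def k by simp
  have e1: "1 / (2 * sqrt \<epsilon>) = \<nu>/2 + real k" using k by (simp add: field_simps)
  have e2: "1 / (2 * sqrt \<epsilon>) + \<nu>/2 = \<nu> + real k" using e1 by simp
  have e3: "1 / (2 * sqrt \<epsilon>) - \<nu>/2 + 1 = real k + 1" using e1 by simp
  show "dL2 \<nu> \<epsilon> = exp (\<i> * of_real pi * of_real (1 - \<nu>)) * gseq \<nu> (Kf \<nu> \<epsilon>)"
    unfolding dL2_def negpow_def gamma_ratio_def gseq_def K unfolding e2 e3 unfolding e1 by (simp only: mult.assoc)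
  show "dR3 \<nu> \<epsilon> = - (1/2) * gseq \<nu> (Kf \<nu> \<epsilon>)"
    unfolding dR3_def gamma_ratio_def gseq_def K unfolding e2 e3 unfolding e1 by (simp only: mult.assoc)
qed

theorem mainTheorem1:
  fixes \<nu> :: real
  shows "((\<lambda>\<epsilon>. mexp (cscaleM (2 * of_real pi * \<i>) (T_L \<nu> \<epsilon>))) \<longlongrightarrow> St_pi \<nu>)
            (at 0 within {\<epsilon>. admissible \<nu> \<epsilon>})
       \<and> ((\<lambda>\<epsilon>. mexp (cscaleM (2 * of_real pi * \<i>) (T_R \<nu> \<epsilon>))) \<longlongrightarrow> St_0 \<nu>)
            (at 0 within {\<epsilon>. admissible \<nu> \<epsilon>})"
proof
  let ?F = "at 0 within {\<epsilon>. admissible \<nu> \<epsilon>}"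
  have ev: "eventually (\<lambda>\<epsilon>. admissible \<nu> \<epsilon>) ?F"
    by (simp add: eventually_at_filter)
  have ex: "exp (\<i> * of_real pi * of_real (1 - \<nu>)) = - exp (- of_real pi * \<i> * of_real \<nu>)"
  proof -
    have "\<i> * of_real pi * of_real (1 - \<nu>) = \<i> * of_real pi + (- of_real pi * \<i> * of_real \<nu>)"
      by (simp add: algebra_simps)
    thus ?thesis by (simp only: exp_add) simp
  qed
  have L1: "((\<lambda>\<epsilon>. 2 * of_real pi * \<i> * (exp (\<i> * of_real pi * of_real (1 - \<nu>)) * gseq \<nu> (Kf \<nu> \<epsilon>)))
      \<longlongrightarrow> - 2 * of_real pi * \<i> * exp (- of_real pi * \<i> * of_real \<nu>) * rGamma (complex_of_real \<nu>)) ?F"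
  proof -
    have "((\<lambda>\<epsilon>. 2 * of_real pi * \<i> * (exp (\<i> * of_real pi * of_real (1 - \<nu>)) * gseq \<nu> (Kf \<nu> \<epsilon>)))
      \<longlongrightarrow> 2 * of_real pi * \<i> * (exp (\<i> * of_real pi * of_real (1 - \<nu>)) * rGamma (complex_of_real \<nu>))) ?F"
      by (intro tendsto_intros gseq_comp)
    thus ?thesis by (simp only: ex) (simp add: mult.assoc)
  qed
  have L2: "((\<lambda>\<epsilon>. 2 * of_real pi * \<i> * (- (1/2) * gseq \<nu> (Kf \<nu> \<epsilon>)))
      \<longlongrightarrow> - of_real pi * \<i> * rGamma (complex_of_real \<nu>)) ?F"
  proof -
    have "((\<lambda>\<epsilon>. 2 * of_real pi * \<i> * (- (1/2) * gseq \<nu> (Kf \<nu> \<epsilon>)))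
      \<longlongrightarrow> 2 * of_real pi * \<i> * (- (1/2) * rGamma (complex_of_real \<nu>))) ?F"
      by (intro tendsto_intros gseq_comp)
    thus ?thesis by (simp add: mult.assoc)
  qed
  show "((\<lambda>\<epsilon>. mexp (cscaleM (2 * of_real pi * \<i>) (T_L \<nu> \<epsilon>))) \<longlongrightarrow> St_pi \<nu>) ?F"
    unfolding St_pi_def
  proof (rule Lim_transform_eventually[OF tendsto_St[OF L1]])
    show "eventually (\<lambda>\<epsilon>. mat 1 + cscaleM (2 * of_real pi * \<i> * (exp (\<i> * of_real pi * of_real (1 - \<nu>)) * gseq \<nu> (Kf \<nu> \<epsilon>))) (munit 1 2)
        = mexp (cscaleM (2 * of_real pi * \<i>) (T_L \<nu> \<epsilon>))) ?F"
      using ev proof eventually_elim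
      case (elim \<epsilon>)
      have n: "(1::3) \<noteq> 2" by simp
      show ?case unfolding T_L_def adm_eq(1)[OF elim] mexp_nil[OF n] ..
    qed
  qed
  show "((\<lambda>\<epsilon>. mexp (cscaleM (2 * of_real pi * \<i>) (T_R \<nu> \<epsilon>))) \<longlongrightarrow> St_0 \<nu>) ?F"
    unfolding St_0_def
  proof (rule Lim_transform_eventually[OF tendsto_St[OF L2]])
    show "eventually (\<lambda>\<epsilon>. mat 1 + cscaleM (2 * of_real pi * \<i> * (- (1/2) * gseq \<nu> (Kf \<nu> \<epsilon>))) (munit 1 3)
        = mexp (cscaleM (2 * of_real pi * \<i>) (T_R \<nu> \<epsilon>))) ?F"
      using ev proof eventually_elim
      case (elim \<epsilon>)
      have n: "(1::3) \<noteq> 3" by simp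
      show ?case unfolding T_R_def adm_eq(2)[OF elim] mexp_nil[OF n] ..
    qed
  qed
qed

end
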